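(* Let $\mathfrak{P}$ be a nonempty compact set of probability distributions $P=(p_\omega)_{\omega\in\Omega}$ on $\Omega$ and $\Phi_A(\mathbf{x})=\max_{P\in\mathfrak{P}}\sum_{\omega\in\Omega}p_\omega Q_\omega(\mathbf{x})$. Let $\hat{\mathbf{x}}\in\mathcal{X}$, for each $\omega$ let $\hat{\mathbf{S}}^\omega$ be an optimal solution of the problem defining $Q_\omega(\hat{\mathbf{x}})$, and let $(\hat p_\omega)_{\omega\in\Omega}\in\arg\max_{P\in\mathfrak{P}}\sum_{\omega\in\Omega}p_\omega f^\omega(\hat{\mathbf{S}}^\omega)$. For each $\omega,q$ fix an ordering $\hat S^\omega_q=\{i^\omega_{q,1},\dots,i^\omega_{q,T^\omega_q}\}$ and for $1\le t\le T^\omega_q$ let $\hat{\mathbf{S}}^\omega_{q,(t)}=(\hat S^\omega_1,\dots,\hat S^\omega_{q-1},\{i^\omega_{q,1},\dots,i^\omega_{q,t-1}\},\emptyset,\dots,\emptyset)$. Then for every $\mathbf{x}\in\mathcal{X}$, $$\Phi_A(\mathbf{x})\;\ge\;\Phi_A(\hat{\mathbf{x}})-\sum_{q=1}^k\sum_{\omega\in\Omega}\sum_{t=1}^{T^\omega_q}\hat p_\omega\,\rho^\omega_{q,i^\omega_{q,t}}(\hat{\mathbf{S}}^\omega_{q,(t)})\,\xi^\omega_{i^\omega_{q,t}}\,x_{q,i^\omega_{q,t}}.$$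
   Context: Let $n,k$ be positive integers and $N=\{1,\dots,n\}$. $\mathbb{X}(N,k)$ denotes the set of $k$-tuples $\mathbf{S}=(S_1,\dots,S_k)$ of pairwise disjoint subsets of $N$; such a tuple is identified with $\mathbf{s}\in\{0,1\}^{kn}$ where $s_{q,i}=1$ iff $i\in S_q$. For $\mathbf{X},\mathbf{Y}\in\mathbb{X}(N,k)$ let $\mathbf{X}\sqcap\mathbf{Y}=(X_1\cap Y_1,\dots,X_k\cap Y_k)$ and $\mathbf{X}\sqcup\mathbf{Y}$ be the tuple whose $i$-th component is $(X_i\cup Y_i)\setminus\bigcup_{q\ne i}(X_q\cup Y_q)$. A function $f:\mathbb{X}(N,k)\to\mathbb{R}$ is $k$-submodular if $f(\mathbf{X})+f(\mathbf{Y})\ge f(\mathbf{X}\sqcap\mathbf{Y})+f(\mathbf{X}\sqcup\mathbf{Y})$ for all $\mathbf{X},\mathbf{Y}$, and monotone if $f(\mathbf{X})\le f(\mathbf{Y})$ whenever $X_q\subseteq Y_q$ for all $q$. $\boldsymbol{\emptyset}=(\emptyset,\dots,\emptyset)$. Given nonnegative integer budgets $A_1,\dots,A_k$ and $D_1,\dots,D_k$, the attacker's feasible set is $\mathcal{X}=\{\mathbf{x}\in\{0,1\}^{kn}:\sum_{i=1}^n x_{q,i}\le A_q\ \forall q,\ \sum_{q=1}^k x_{q,i}\le 1\ \forall i\in N\}$. Stochastic setting: $\Omega$ is a finite set of scenarios; for each $\omega\in\Omega$ we are given $\xi^\omega\in\{0,1\}^n$ and a monotone $k$-submodular function $f^\omega:\mathbb{X}(N,k)\to\mathbb{R}$,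 with marginal gains $\rho^\omega_{q,i}(\mathbf{X})=f^\omega(X_1,\dots,X_q\cup\{i\},\dots,X_k)-f^\omega(\mathbf{X})$ for $i\notin\bigcup_r X_r$. For $\mathbf{x}\in\mathcal{X}$, $Q_\omega(\mathbf{x})=\max\{f^\omega(\mathbf{S}):\mathbf{S}\in\mathbb{X}(N,k),\ s_{q,i}\le 1-x_{q,i}\xi^\omega_i\ \forall q,i,\ \sum_{i=1}^n s_{q,i}\le D_q\ \forall q\}$. *)

theory Defs
  imports "HOL-Analysis.Analysis"
begin

text \<open>A k-tuple (S_1,...,S_k) of pairwise disjoint subsets of N = {1..n} is represented
  as a function S :: nat \<Rightarrow> nat set with S q = {} for q outside {1..k}.\<close>

definition ktuples :: "nat \<Rightarrow> nat \<Rightarrow> (nat \<Rightarrow> nat set) set" where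
  "ktuples n k = {S. (\<forall>q. S q \<subseteq> {1..n}) \<and> (\<forall>q. q \<notin> {1..k} \<longrightarrow> S q = {}) \<and>
      (\<forall>q\<in>{1..k}. \<forall>r\<in>{1..k}. q \<noteq> r \<longrightarrow> S q \<inter> S r = {})}"

definition kmeet :: "(nat \<Rightarrow> nat set) \<Rightarrow> (nat \<Rightarrow> nat set) \<Rightarrow> (nat \<Rightarrow> nat set)" where
  "kmeet X Y = (\<lambda>q. X q \<inter> Y q)"

definition kjoin :: "nat \<Rightarrow> (nat \<Rightarrow> nat set) \<Rightarrow> (nat \<Rightarrow> nat set) \<Rightarrow> (nat \<Rightarrow> nat set)" where
  "kjoin k X Y = (\<lambda>q. if q \<in> {1..k}
      then (X q \<union> Y q) - (\<Union>r\<in>{1..k} - {q}. X r \<union> Y r) else {})"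

definition k_submodular :: "nat \<Rightarrow> nat \<Rightarrow> ((nat \<Rightarrow> nat set) \<Rightarrow> real) \<Rightarrow> bool" where
  "k_submodular n k f \<longleftrightarrow> (\<forall>X\<in>ktuples n k. \<forall>Y\<in>ktuples n k.
      f X + f Y \<ge> f (kmeet X Y) + f (kjoin k X Y))"

definition k_monotone :: "nat \<Rightarrow> nat \<Rightarrow> ((nat \<Rightarrow> nat set) \<Rightarrow> real) \<Rightarrow> bool" where
  "k_monotone n k f \<longleftrightarrow> (\<forall>X\<in>ktuples n k. \<forall>Y\<in>ktuples n k.
      (\<forall>q\<in>{1..k}. X q \<subseteq> Y q) \<longrightarrow> f X \<le> f Y)"

definition marg :: "((nat \<Rightarrow> nat set) \<Rightarrow> real) \<Rightarrow> nat \<Rightarrow> nat \<Rightarrow> (nat \<Rightarrow> nat set) \<Rightarrow> real" where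
  "marg f q i X = f (X(q := X q \<union> {i})) - f X"

definition ind :: "(nat \<Rightarrow> nat set) \<Rightarrow> nat \<Rightarrow> nat \<Rightarrow> real" where
  "ind x q i = (if i \<in> x q then 1 else 0)"

text \<open>Attacker's feasible set \<X> (x identified with a tuple of disjoint sets).\<close>
definition attack_set :: "nat \<Rightarrow> nat \<Rightarrow> (nat \<Rightarrow> nat) \<Rightarrow> (nat \<Rightarrow> nat set) set" where
  "attack_set n k A = {x \<in> ktuples n k. \<forall>q\<in>{1..k}. card (x q) \<le> A q}"

definition inner_feas :: "nat \<Rightarrow> nat \<Rightarrow> (nat \<Rightarrow> nat) \<Rightarrow> (nat \<Rightarrow> real) \<Rightarrow> (nat \<Rightarrow> nat set)
    \<Rightarrow> (nat \<Rightarrow> nat set) set" where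
  "inner_feas n k D \<xi> x = {S \<in> ktuples n k.
      (\<forall>q\<in>{1..k}. \<forall>i\<in>{1..n}. ind S q i \<le> 1 - ind x q i * \<xi> i) \<and>
      (\<forall>q\<in>{1..k}. card (S q) \<le> D q)}"

definition Qval :: "nat \<Rightarrow> nat \<Rightarrow> (nat \<Rightarrow> nat) \<Rightarrow> (nat \<Rightarrow> real) \<Rightarrow> ((nat \<Rightarrow> nat set) \<Rightarrow> real)
    \<Rightarrow> (nat \<Rightarrow> nat set) \<Rightarrow> real" where
  "Qval n k D \<xi> f x = Max (f ` inner_feas n k D \<xi> x)"

definition prob_dists :: "'w set \<Rightarrow> ('w \<Rightarrow> real) set" where
  "prob_dists \<Omega> = {p. (\<forall>w\<in>\<Omega>. p w \<ge> 0) \<and> (\<forall>w. w \<notin> \<Omega> \<longrightarrow> p w = 0) \<and> (\<Sum>w\<in>\<Omega>. p w) = 1}"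

text \<open>Phi_A(x) = max over P of expected Q; the max is attained by compactness, so it equals the Sup.\<close>
definition PhiA :: "'w set \<Rightarrow> ('w \<Rightarrow> real) set \<Rightarrow> ('w \<Rightarrow> (nat \<Rightarrow> nat set) \<Rightarrow> real)
    \<Rightarrow> (nat \<Rightarrow> nat set) \<Rightarrow> real" where
  "PhiA \<Omega> \<PP> Q x = (SUP p\<in>\<PP>. \<Sum>w\<in>\<Omega>. p w * Q w x)"

end

theory Submission
  imports Defs
begin

lemma ktuples_finite: "finite (ktuples n k)"
proof -
  have "ktuples n k \<subseteq> {S. \<forall>q. (q \<in> {1..k} \<longrightarrow> S q \<in> Pow {1..n}) \<and> (q \<notin> {1..k} \<longrightarrow> S q = {})}"
    unfolding ktuples_def by auto
  moreover have "finite {S. \<forall>q. (q \<in> {1..k} \<longrightarrow> S q \<in> Pow {1..n}) \<and> (q \<notin> {1..k} \<longrightarrow> S q = {})}"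
    by (rule finite_set_of_finite_funs) auto
  ultimately show ?thesis by (rule finite_subset)
qed

lemma ktuples_sub:
  assumes "Y \<in> ktuples n k" "\<forall>r. X r \<subseteq> Y r"
  shows "X \<in> ktuples n k"
  using assms unfolding ktuples_def by blast

lemma orthant:
  assumes sub: "k_submodular n k f" and Y: "Y \<in> ktuples n k" and XY: "\<forall>r. X r \<subseteq> Y r"
    and q: "q \<in> {1..k}" and i: "i \<in> {1..n}" and ni: "\<forall>r. i \<notin> Y r"
  shows "marg f q i Y \<le> marg f q i X"
proof -
  have X: "X \<in> ktuples n k" using ktuples_sub[OF Y XY] .
  let ?X' = "X(q := X q \<union> {i})" and ?Y' = "Y(q := Y q \<union> {i})"
  have X': "?X' \<in> ktuples n k" using X q i ni XY unfolding ktuples_def by auto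
  have Y': "?Y' \<in> ktuples n k" using Y q i ni unfolding ktuples_def by auto
  have m: "kmeet ?X' Y = X" using XY ni unfolding kmeet_def by (auto simp: fun_eq_iff)
  have u: "\<And>s. ?X' s \<union> Y s = ?Y' s" using XY by auto
  have j: "kjoin k ?X' Y = ?Y'"
  proof (rule ext)
    fix r show "kjoin k ?X' Y r = ?Y' r"
    proof (cases "r \<in> {1..k}")
      case True
      have d: "\<forall>s\<in>{1..k} - {r}. ?Y' s \<inter> ?Y' r = {}"
        using Y' True unfolding ktuples_def by blast
      have "kjoin k ?X' Y r = ?Y' r - (\<Union>s\<in>{1..k} - {r}. ?Y' s)"
        using True unfolding kjoin_def u by simp
      also have "\<dots> = ?Y' r" using d by blast
      finally show ?thesis .
    next
      case False
      then show ?thesis using Y q unfolding kjoin_def ktuples_def by auto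
    qed
  qed
  have "f ?X' + f Y \<ge> f (kmeet ?X' Y) + f (kjoin k ?X' Y)"
    using sub X' Y unfolding k_submodular_def by blast
  then show ?thesis using m j unfolding marg_def by simp
qed


lemma scen:
  fixes f :: "(nat \<Rightarrow> nat set) \<Rightarrow> real" and x :: "nat \<Rightarrow> nat set"
  assumes sub: "k_submodular n k f" and S: "S \<in> ktuples n k"
    and bij: "\<forall>q\<in>{1..k}. bij_betw (idx q) {1..card (S q)} (S q)"
    and xi: "\<forall>i\<in>{1..n}. \<xi> i \<in> {0, 1}"
  defines "Pf \<equiv> \<lambda>q t. (\<lambda>r. if r < q then S r else if r = q then idx q ` {1..<t} else {})"
  defines "Pr \<equiv> \<lambda>Z. (\<lambda>r. Z r - {i. i \<in> x r \<and> \<xi> i = 1})"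
  shows "f S - f (Pr S) \<le> (\<Sum>q=1..k. \<Sum>t=1..card (S q).
            marg f q (idx q t) (Pf q t) * \<xi> (idx q t) * ind x q (idx q t))"
proof -
  define c where "c = (\<lambda>q t. marg f q (idx q t) (Pf q t) * \<xi> (idx q t) * ind x q (idx q t))"
  define T where "T = (\<lambda>q. card (S q))"
  have Sk: "\<And>r. r \<notin> {1..k} \<Longrightarrow> S r = {}" using S unfolding ktuples_def by auto
  have Sn: "\<And>r. S r \<subseteq> {1..n}" using S unfolding ktuples_def by auto
  have Sd: "\<And>q r. q \<in> {1..k} \<Longrightarrow> r \<in> {1..k} \<Longrightarrow> q \<noteq> r \<Longrightarrow> S q \<inter> S r = {}"
    using S unfolding ktuples_def by auto
  have img: "\<And>q. q \<in> {1..k} \<Longrightarrow> idx q ` {1..T q} = S q"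
    using bij unfolding T_def bij_betw_def by auto
  have injq: "\<And>q. q \<in> {1..k} \<Longrightarrow> inj_on (idx q) {1..T q}"
    using bij unfolding T_def bij_betw_def by auto
  have step: "f (Pf q (Suc t)) - f (Pr (Pf q (Suc t))) \<le> f (Pf q t) - f (Pr (Pf q t)) + c q t"
    if q: "q \<in> {1..k}" and t: "1 \<le> t" "t \<le> T q" for q t
  proof -
    define X where "X = Pf q t"
    define i where "i = idx q t"
    have iS: "i \<in> S q" using img[OF q] t unfolding i_def by auto
    have iN: "i \<in> {1..n}" using iS Sn[of q] by blast
    have XS: "\<forall>r. X r \<subseteq> S r"
    proof
      fix r show "X r \<subseteq> S r"
        using img[OF q] t unfolding X_def Pf_def by (auto simp: Sk)
    qed
    have X: "X \<in> ktuples n k" using ktuples_sub[OF S XS] .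
    have ni: "\<forall>r. i \<notin> X r"
    proof
      fix r
      show "i \<notin> X r"
      proof (cases "r < q")
        case True
        then show ?thesis
        proof (cases "r \<in> {1..k}")
          case True
          have "X r = S r" using \<open>r < q\<close> unfolding X_def Pf_def by simp
          moreover have "S q \<inter> S r = {}" using Sd[OF q True] \<open>r < q\<close> by simp
          ultimately show ?thesis using iS by blast
        next
          case False then show ?thesis using Sk[OF False] \<open>r < q\<close> unfolding X_def Pf_def by simp
        qed
      next
        case False
        have "i \<notin> idx q ` {1..<t}"
        proof
          assume "i \<in> idx q ` {1..<t}"
          then obtain s where s: "s \<in> {1..<t}" "idx q s = idx q t" unfolding i_def by auto
          moreover have "s \<in> {1..T q}" "t \<in> {1..T q}" using s t by auto
          ultimately have "s = t" using injq[OF q] unfolding inj_on_def by blast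
          then show False using s by auto
        qed
        then show ?thesis using False unfolding X_def Pf_def by simp
      qed
    qed
    have PS: "Pf q (Suc t) = X(q := X q \<union> {i})"
      using t(1) unfolding X_def Pf_def i_def by (auto simp: fun_eq_iff atLeastLessThanSuc image_insert)
    show ?thesis
    proof (cases "i \<in> x q \<and> \<xi> i = 1")
      case True
      have e: "Pr (X(q := X q \<union> {i})) = Pr X" unfolding Pr_def using True by (auto simp: fun_eq_iff)
      have "c q t = marg f q i X" unfolding c_def X_def i_def using True by (simp add: ind_def i_def)
      then show ?thesis unfolding PS e X_def[symmetric] by (simp add: marg_def)
    next
      case False
      have c0: "c q t = 0" unfolding c_def ind_def using False xi iN unfolding i_def by auto
      have e: "Pr (X(q := X q \<union> {i})) = (Pr X)(q := Pr X q \<union> {i})"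
        unfolding Pr_def using False by (auto simp: fun_eq_iff)
      have "marg f q i X \<le> marg f q i (Pr X)"
        by (rule orthant[OF sub X _ q iN ni]) (auto simp: Pr_def)
      then show ?thesis unfolding PS e X_def[symmetric] c0 by (simp add: marg_def)
    qed
  qed
  have inner: "f (Pf q (Suc t)) - f (Pr (Pf q (Suc t))) \<le> f (Pf q 1) - f (Pr (Pf q 1)) + (\<Sum>s=1..t. c q s)"
    if q: "q \<in> {1..k}" and t: "t \<le> T q" for q t
    using t
  proof (induction t)
    case 0 then show ?case by simp
  next
    case (Suc t)
    have "f (Pf q (Suc (Suc t))) - f (Pr (Pf q (Suc (Suc t)))) \<le> f (Pf q (Suc t)) - f (Pr (Pf q (Suc t))) + c q (Suc t)"
      using step[OF q, of "Suc t"] Suc.prems by auto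
    then show ?case using Suc by simp
  qed
  have blk: "Pf q (Suc (T q)) = Pf (Suc q) 1" if q: "q \<in> {1..k}" for q
  proof (rule ext)
    fix r
    have e: "idx q ` {1..<Suc (T q)} = S q" using img[OF q] by (simp add: atLeastLessThanSuc_atLeastAtMost)
    show "Pf q (Suc (T q)) r = Pf (Suc q) 1 r"
      unfolding Pf_def using e by (cases "r < q"; cases "r = q") auto
  qed
  have outer: "f (Pf (Suc m) 1) - f (Pr (Pf (Suc m) 1)) \<le> (\<Sum>q=1..m. \<Sum>t=1..T q. c q t)"
    if "m \<le> k" for m
    using that
  proof (induction m)
    case 0
    have "Pf 1 1 = Pr (Pf 1 1)" unfolding Pf_def Pr_def using Sk[of 0] by (auto simp: fun_eq_iff)
    then show ?case by simp
  next
    case (Suc m)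
    have q: "Suc m \<in> {1..k}" using Suc.prems by auto
    have "f (Pf (Suc (Suc m)) 1) - f (Pr (Pf (Suc (Suc m)) 1)) \<le> f (Pf (Suc m) 1) - f (Pr (Pf (Suc m) 1)) + (\<Sum>s=1..T (Suc m). c (Suc m) s)"
      using inner[OF q order.refl] blk[OF q] by simp
    then show ?case using Suc by simp
  qed
  have "Pf (Suc k) 1 = S" unfolding Pf_def using Sk by (auto simp: fun_eq_iff)
  then show ?thesis using outer[of k] unfolding c_def T_def by simp
qed

theorem theorem5:
  fixes n k :: nat and A D :: "nat \<Rightarrow> nat" and \<Omega> :: "'w set"
    and \<xi> :: "'w \<Rightarrow> nat \<Rightarrow> real" and f :: "'w \<Rightarrow> (nat \<Rightarrow> nat set) \<Rightarrow> real"
    and \<PP> :: "('w \<Rightarrow> real) set"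
    and xhat :: "nat \<Rightarrow> nat set" and Shat :: "'w \<Rightarrow> nat \<Rightarrow> nat set"
    and phat :: "'w \<Rightarrow> real" and idx :: "'w \<Rightarrow> nat \<Rightarrow> nat \<Rightarrow> nat"
    and x :: "nat \<Rightarrow> nat set"
  assumes "n > 0" and "k > 0"
    and "finite \<Omega>"
    and "\<forall>w\<in>\<Omega>. \<forall>i\<in>{1..n}. \<xi> w i \<in> {0, 1}"
    and "\<forall>w\<in>\<Omega>. k_monotone n k (f w) \<and> k_submodular n k (f w)"
    and "\<PP> \<noteq> {}" and "\<PP> \<subseteq> prob_dists \<Omega>" and "compact \<PP>"
    and "xhat \<in> attack_set n k A"
    and "\<forall>w\<in>\<Omega>. Shat w \<in> inner_feas n k D (\<xi> w) xhat \<and>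
           (\<forall>S\<in>inner_feas n k D (\<xi> w) xhat. f w S \<le> f w (Shat w))"
    and "phat \<in> \<PP>"
    and "\<forall>p\<in>\<PP>. (\<Sum>w\<in>\<Omega>. p w * f w (Shat w)) \<le> (\<Sum>w\<in>\<Omega>. phat w * f w (Shat w))"
    and "\<forall>w\<in>\<Omega>. \<forall>q\<in>{1..k}. bij_betw (idx w q) {1..card (Shat w q)} (Shat w q)"
    and "x \<in> attack_set n k A"
  shows "PhiA \<Omega> \<PP> (\<lambda>w. Qval n k D (\<xi> w) (f w)) x \<ge>
           PhiA \<Omega> \<PP> (\<lambda>w. Qval n k D (\<xi> w) (f w)) xhat
           - (\<Sum>q=1..k. \<Sum>w\<in>\<Omega>. \<Sum>t=1..card (Shat w q).
                phat w
                * marg (f w) q (idx w q t)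
                    (\<lambda>r. if r < q then Shat w r else if r = q then idx w q ` {1..<t} else {})
                * \<xi> w (idx w q t) * ind x q (idx w q t))"
  proof -
  note a = assms
  define Qv where "Qv = (\<lambda>w. Qval n k D (\<xi> w) (f w))"
  define S' where "S' = (\<lambda>w r. Shat w r - {i. i \<in> x r \<and> \<xi> w i = 1})"
  define Pf where "Pf = (\<lambda>w q t. (\<lambda>r. if r < q then Shat w r else if r = q then idx w q ` {1..<t} else {}))"
  define C where "C = (\<lambda>w. (\<Sum>q=1..k. \<Sum>t=1..card (Shat w q).
            marg (f w) q (idx w q t) (Pf w q t) * \<xi> w (idx w q t) * ind x q (idx w q t)))"
  have xk: "x \<in> ktuples n k" using a(14) unfolding attack_set_def by auto
  have fin: "\<And>w y. finite (inner_feas n k D (\<xi> w) y)"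
    by (rule finite_subset[OF _ ktuples_finite[of n k]]) (auto simp: inner_feas_def)
  have key: "Qv w x \<ge> f w (Shat w) - C w \<and> Qv w xhat \<le> f w (Shat w)" if w: "w \<in> \<Omega>" for w
  proof -
    have Sh: "Shat w \<in> inner_feas n k D (\<xi> w) xhat" using a(10) w by auto
    have Shk: "Shat w \<in> ktuples n k" using Sh unfolding inner_feas_def by auto
    have xi: "\<forall>i\<in>{1..n}. \<xi> w i \<in> {0, 1}" using a(4) w by auto
    have sub: "k_submodular n k (f w)" using a(5) w by auto
    have S'k: "S' w \<in> ktuples n k" by (rule ktuples_sub[OF Shk]) (auto simp: S'_def)
    have Shn: "\<And>r. Shat w r \<subseteq> {1..n}" using Shk unfolding ktuples_def by auto
    have S'f: "S' w \<in> inner_feas n k D (\<xi> w) x"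
      unfolding inner_feas_def
    proof (intro CollectI conjI ballI S'k)
      fix q i assume q: "q \<in> {1..k}" and i: "i \<in> {1..n}"
      have "\<xi> w i = 0 \<or> \<xi> w i = 1" using xi i by auto
      then show "ind (S' w) q i \<le> 1 - ind x q i * \<xi> w i"
        unfolding ind_def S'_def by auto
    next
      fix q assume q: "q \<in> {1..k}"
      have "card (S' w q) \<le> card (Shat w q)"
        by (rule card_mono) (auto simp: S'_def intro: finite_subset[OF Shn[of q]])
      moreover have "card (Shat w q) \<le> D q" using Sh q unfolding inner_feas_def by auto
      ultimately show "card (S' w q) \<le> D q" by simp
    qed
    have "Qv w x \<ge> f w (S' w)" unfolding Qv_def Qval_def
      by (rule Max_ge) (use fin S'f in auto)
    moreover have "f w (Shat w) - f w (S' w) \<le> C w"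
      unfolding C_def Pf_def S'_def
      by (rule scen[OF sub Shk _ xi]) (use a(13) w in auto)
    moreover have "Qv w xhat \<le> f w (Shat w)" unfolding Qv_def Qval_def
      using a(10) w fin Sh by (subst Max_le_iff) auto
    ultimately show ?thesis by simp
  qed
  have pd: "\<And>p w. p \<in> \<PP> \<Longrightarrow> w \<in> \<Omega> \<Longrightarrow> 0 \<le> p w \<and> p w \<le> 1"
  proof -
    fix p w assume p: "p \<in> \<PP>" and w: "w \<in> \<Omega>"
    have pp: "p \<in> prob_dists \<Omega>" using p a(7) by auto
    then have nn: "\<forall>v\<in>\<Omega>. 0 \<le> p v" and s1: "(\<Sum>v\<in>\<Omega>. p v) = 1" unfolding prob_dists_def by auto
    have "p w \<le> (\<Sum>v\<in>\<Omega>. p v)" by (rule member_le_sum) (use w nn a(3) in auto)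
    then show "0 \<le> p w \<and> p w \<le> 1" using s1 nn w by auto
  qed
  have bdd: "bdd_above ((\<lambda>p. \<Sum>w\<in>\<Omega>. p w * Qv w x) ` \<PP>)"
  proof (rule bdd_aboveI2)
    fix p assume p: "p \<in> \<PP>"
    show "(\<Sum>w\<in>\<Omega>. p w * Qv w x) \<le> (\<Sum>w\<in>\<Omega>. \<bar>Qv w x\<bar>)"
    proof (rule sum_mono)
      fix w assume w: "w \<in> \<Omega>"
      have "p w * Qv w x \<le> \<bar>p w * Qv w x\<bar>" by simp
      also have "\<dots> = p w * \<bar>Qv w x\<bar>" using pd[OF p w] by (simp add: abs_mult)
      also have "\<dots> \<le> 1 * \<bar>Qv w x\<bar>" using pd[OF p w] by (intro mult_right_mono) auto
      finally show "p w * Qv w x \<le> \<bar>Qv w x\<bar>" by simp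
    qed
  qed
  have L1: "PhiA \<Omega> \<PP> Qv x \<ge> (\<Sum>w\<in>\<Omega>. phat w * Qv w x)"
    unfolding PhiA_def by (rule cSUP_upper[OF a(11) bdd])
  have L2: "(\<Sum>w\<in>\<Omega>. phat w * Qv w x) \<ge> (\<Sum>w\<in>\<Omega>. phat w * f w (Shat w)) - (\<Sum>w\<in>\<Omega>. phat w * C w)"
  proof -
    have "(\<Sum>w\<in>\<Omega>. phat w * f w (Shat w)) - (\<Sum>w\<in>\<Omega>. phat w * C w) = (\<Sum>w\<in>\<Omega>. phat w * (f w (Shat w) - C w))"
      by (simp add: sum_subtractf right_diff_distrib)
    also have "\<dots> \<le> (\<Sum>w\<in>\<Omega>. phat w * Qv w x)"
      by (rule sum_mono, rule mult_left_mono) (use key pd[OF a(11)] in auto)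
    finally show ?thesis .
  qed
  have L3: "PhiA \<Omega> \<PP> Qv xhat \<le> (\<Sum>w\<in>\<Omega>. phat w * f w (Shat w))"
    unfolding PhiA_def
  proof (rule cSUP_least[OF a(6)])
    fix p assume p: "p \<in> \<PP>"
    have "(\<Sum>w\<in>\<Omega>. p w * Qv w xhat) \<le> (\<Sum>w\<in>\<Omega>. p w * f w (Shat w))"
      by (rule sum_mono, rule mult_left_mono) (use key pd[OF p] in auto)
    also have "\<dots> \<le> (\<Sum>w\<in>\<Omega>. phat w * f w (Shat w))" using a(12) p by auto
    finally show "(\<Sum>w\<in>\<Omega>. p w * Qv w xhat) \<le> (\<Sum>w\<in>\<Omega>. phat w * f w (Shat w))" .
  qed
  have L4: "(\<Sum>w\<in>\<Omega>. phat w * C w) = (\<Sum>q=1..k. \<Sum>w\<in>\<Omega>. \<Sum>t=1..card (Shat w q).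
                phat w
                * marg (f w) q (idx w q t)
                    (\<lambda>r. if r < q then Shat w r else if r = q then idx w q ` {1..<t} else {})
                * \<xi> w (idx w q t) * ind x q (idx w q t))"
    unfolding C_def Pf_def
    by (simp add: sum_distrib_left mult.assoc, rule sum.swap)
  show ?thesis using L1 L2 L3 L4 unfolding Qv_def by linarith
qed

end
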